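(* For every $t>0$ there is a constant $C_t>0$ such that for all integers $m\ge3$, $$\Big(\frac1\pi\Big)^m\int_{\substack{v_j,r_j>0\\ v_1+r_2+v_2+\dots+v_{m-1}+r_m+v_m<t}}\prod_{j=1}^mdv_j\prod_{j=2}^mdr_j\ \prod_{j=2}^m\frac{1}{r_j^{1/2}\,(v_{j-1}+v_j+3r_j/4)^{3/2}}\ \ge\ C_t\,(1.008)^m\,\frac{1}{m(m-1)}.$$
   Context: All variables $v_1,\dots,v_m,r_2,\dots,r_m$ are real; the integral is a Lebesgue integral over the indicated open region of $(0,\infty)^{2m-1}$. *)

theory Defs
  imports "HOL-Analysis.Analysis"
begin

definition int_space :: "nat \<Rightarrow> ((nat \<Rightarrow> real) \<times> (nat \<Rightarrow> real)) measure" where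
  "int_space m = (PiM {1..m} (\<lambda>_. lborel)) \<Otimes>\<^sub>M (PiM {2..m} (\<lambda>_. lborel))"

definition int_region :: "nat \<Rightarrow> real \<Rightarrow> ((nat \<Rightarrow> real) \<times> (nat \<Rightarrow> real)) set" where
  "int_region m t = {(v, r). (\<forall>j\<in>{1..m}. v j > 0) \<and> (\<forall>j\<in>{2..m}. r j > 0) \<and>
      (\<Sum>j=1..m. v j) + (\<Sum>j=2..m. r j) < t}"

definition integrand :: "nat \<Rightarrow> (nat \<Rightarrow> real) \<Rightarrow> (nat \<Rightarrow> real) \<Rightarrow> real" where
  "integrand m v r = (\<Prod>j=2..m. 1 / (r j powr (1/2) * (v (j-1) + v j + 3 * r j / 4) powr (3/2)))"

end

theory Submission
  imports Defs
begin

interpretation PS: product_sigma_finite "\<lambda>_::nat. lborel :: real measure"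
  by standard

lemma meas_k:
  assumes k[measurable]: "case_prod k \<in> borel_measurable borel" and "i \<in> I" "j \<in> I"
  shows "(\<lambda>v. k (v i) (v j) :: ennreal) \<in> borel_measurable (PiM I (\<lambda>_. lborel :: real measure))"
proof -
  have "(\<lambda>v. case_prod k (v i, v j)) \<in> borel_measurable (PiM I (\<lambda>_. lborel :: real measure))"
    using assms(2,3) by measurable
  then show ?thesis by simp
qed

definition Qc :: "nat \<Rightarrow> (real \<Rightarrow> ennreal) \<Rightarrow> (real \<Rightarrow> real \<Rightarrow> ennreal) \<Rightarrow> (real \<Rightarrow> ennreal) \<Rightarrow> ennreal" where
 "Qc m A k w = (\<integral>\<^sup>+v. (\<Prod>j\<in>{1..m}. A (v j)) * (\<Prod>j\<in>{2..m}. k (v (j-1)) (v j)) * w (v m) \<partial>PiM {1..m} (\<lambda>_. lborel))"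

definition Tc :: "(real \<Rightarrow> ennreal) \<Rightarrow> (real \<Rightarrow> real \<Rightarrow> ennreal) \<Rightarrow> (real \<Rightarrow> ennreal) \<Rightarrow> real \<Rightarrow> ennreal" where
 "Tc A k w x = (\<integral>\<^sup>+y. A y * k x y * w y \<partial>lborel)"

lemma Tc_meas:
  fixes A w :: "real \<Rightarrow> ennreal" and k :: "real \<Rightarrow> real \<Rightarrow> ennreal"
  assumes [measurable]: "A \<in> borel_measurable borel" "w \<in> borel_measurable borel" "case_prod k \<in> borel_measurable borel"
  shows "Tc A k w \<in> borel_measurable borel"
proof -
  have "sets (lborel \<Otimes>\<^sub>M lborel) = sets (borel::(real*real) measure)"
    by (metis borel_prod sets_lborel sets_pair_measure_cong)
  then have "case_prod k \<in> borel_measurable (lborel \<Otimes>\<^sub>M lborel)"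
    using assms(3) measurable_cong_sets[OF _ refl] by blast
  then have [measurable]: "(\<lambda>x. k (fst x) (snd x)) \<in> borel_measurable (lborel \<Otimes>\<^sub>M lborel)"
    by (simp add: split_beta')
  have "(\<lambda>x. \<integral>\<^sup>+y. A y * k x y * w y \<partial>lborel) \<in> borel_measurable lborel"
    by measurable
  then show ?thesis unfolding Tc_def by simp
qed

lemma Qc_meas:
  fixes A w :: "real \<Rightarrow> ennreal" and k :: "real \<Rightarrow> real \<Rightarrow> ennreal" and m :: nat
  assumes [measurable]: "A \<in> borel_measurable borel" "w \<in> borel_measurable borel" "case_prod k \<in> borel_measurable borel"
  and "m \<ge> 1"
  shows "(\<lambda>v. (\<Prod>j\<in>{1..m}. A (v j)) * (\<Prod>j\<in>{2..m}. k (v (j-1)) (v j)) * w (v m)) \<in> borel_measurable (PiM {1..m} (\<lambda>_. lborel :: real measure))"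
proof -
  have [measurable]: "(\<lambda>v. k (v (j-1)) (v j)) \<in> borel_measurable (PiM {1..m} (\<lambda>_. lborel :: real measure))" if "j \<in> {2..m}" for j :: nat
  proof -
    have "j-1 \<in> {1..m}" "j \<in> {1..m}" using that by auto
    from meas_k[OF assms(3) this] show ?thesis .
  qed
  show ?thesis
    apply measurable
    using \<open>m \<ge> 1\<close> by auto
qed

lemma Qc_Suc:
  fixes A w :: "real \<Rightarrow> ennreal" and k :: "real \<Rightarrow> real \<Rightarrow> ennreal" and m :: nat
  assumes [measurable]: "A \<in> borel_measurable borel" "w \<in> borel_measurable borel" "case_prod k \<in> borel_measurable borel"
  and m1: "m \<ge> 1"
  shows "Qc (Suc m) A k w = Qc m A k (Tc A k w)"
proof -
  have [measurable]: "k a \<in> borel_measurable borel" for a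
  proof -
    have "(\<lambda>y. case_prod k (a,y)) \<in> borel_measurable borel" by measurable
    then show ?thesis by simp
  qed
  have [measurable]: "w \<in> borel_measurable lborel" "A \<in> borel_measurable lborel" by simp_all
  let ?F = "\<lambda>v. (\<Prod>j\<in>{1..Suc m}. A (v j)) * (\<Prod>j\<in>{2..Suc m}. k (v (j-1)) (v j)) * w (v (Suc m))"
  let ?P = "\<lambda>v. (\<Prod>j\<in>{1..m}. A (v j)) * (\<Prod>j\<in>{2..m}. k (v (j-1)) (v j))"
  have ins: "{1..Suc m} = insert (Suc m) {1..m}" by auto
  have meas: "?F \<in> borel_measurable (PiM (insert (Suc m) {1..m}) (\<lambda>_. lborel :: real measure))"
    using Qc_meas[OF assms(1-3), of "Suc m"] unfolding ins by simp
  have "Qc (Suc m) A k w = integral\<^sup>N (PiM (insert (Suc m) {1..m}) (\<lambda>_. lborel)) ?F"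
    unfolding Qc_def ins ..
  also have "\<dots> = (\<integral>\<^sup>+ x. (\<integral>\<^sup>+ y. ?F (x(Suc m := y)) \<partial>lborel) \<partial>PiM {1..m} (\<lambda>_. lborel))"
    by (rule PS.product_nn_integral_insert[OF _ _ meas]) auto
  also have "\<dots> = (\<integral>\<^sup>+ x. ?P x * Tc A k w (x m) \<partial>PiM {1..m} (\<lambda>_. lborel))"
  proof (rule nn_integral_cong)
    fix x :: "nat \<Rightarrow> real"
    have e1: "(\<Prod>j\<in>{1..Suc m}. A ((x(Suc m := y)) j)) = (\<Prod>j\<in>{1..m}. A (x j)) * A y" for y
    proof -
      have "(\<Prod>j\<in>{1..Suc m}. A ((x(Suc m := y)) j)) = A y * (\<Prod>j\<in>{1..m}. A ((x(Suc m := y)) j))"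
        unfolding ins by (subst prod.insert) auto
      also have "(\<Prod>j\<in>{1..m}. A ((x(Suc m := y)) j)) = (\<Prod>j\<in>{1..m}. A (x j))"
        by (rule prod.cong) auto
      finally show ?thesis by (simp add: mult.commute)
    qed
    have ins2: "{2..Suc m} = insert (Suc m) {2..m}" using m1 by auto
    have e2: "(\<Prod>j\<in>{2..Suc m}. k ((x(Suc m := y)) (j-1)) ((x(Suc m := y)) j)) = (\<Prod>j\<in>{2..m}. k (x (j-1)) (x j)) * k (x m) y" for y
    proof -
      have "(\<Prod>j\<in>{2..Suc m}. k ((x(Suc m := y)) (j-1)) ((x(Suc m := y)) j)) = k (x m) y * (\<Prod>j\<in>{2..m}. k ((x(Suc m := y)) (j-1)) ((x(Suc m := y)) j))"
        unfolding ins2 using m1 by (subst prod.insert) auto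
      also have "(\<Prod>j\<in>{2..m}. k ((x(Suc m := y)) (j-1)) ((x(Suc m := y)) j)) = (\<Prod>j\<in>{2..m}. k (x (j-1)) (x j))"
        by (rule prod.cong) auto
      finally show ?thesis by (simp add: mult.commute)
    qed
    have "(\<integral>\<^sup>+ y. ?F (x(Suc m := y)) \<partial>lborel) = (\<integral>\<^sup>+ y. ?P x * (A y * k (x m) y * w y) \<partial>lborel)"
      by (rule nn_integral_cong) (simp only: e1 e2 fun_upd_same, simp add: mult_ac)
    also have "\<dots> = ?P x * Tc A k w (x m)"
      unfolding Tc_def by (rule nn_integral_cmult) measurable
    finally show "(\<integral>\<^sup>+ y. ?F (x(Suc m := y)) \<partial>lborel) = ?P x * Tc A k w (x m)" .
  qed
  also have "\<dots> = Qc m A k (Tc A k w)"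
    unfolding Qc_def by simp
  finally show ?thesis .
qed

lemma Qc_mono:
  fixes A w1 w2 :: "real \<Rightarrow> ennreal" and k :: "real \<Rightarrow> real \<Rightarrow> ennreal" and m :: nat
  assumes "\<And>x. w1 x \<le> w2 x"
  shows "Qc m A k w1 \<le> Qc m A k w2"
  unfolding Qc_def by (intro nn_integral_mono mult_left_mono assms) auto

lemma Qc_cmult:
  fixes A w :: "real \<Rightarrow> ennreal" and k :: "real \<Rightarrow> real \<Rightarrow> ennreal" and m :: nat
  assumes [measurable]: "A \<in> borel_measurable borel" "w \<in> borel_measurable borel" "case_prod k \<in> borel_measurable borel"
  and m1: "m \<ge> 1"
  shows "Qc m A k (\<lambda>x. c * w x) = c * Qc m A k w"
proof -
  have "Qc m A k (\<lambda>x. c * w x) = (\<integral>\<^sup>+v. c * ((\<Prod>j\<in>{1..m}. A (v j)) * (\<Prod>j\<in>{2..m}. k (v (j-1)) (v j)) * w (v m)) \<partial>PiM {1..m} (\<lambda>_. lborel))"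
    unfolding Qc_def by (simp add: mult_ac)
  also have "\<dots> = c * Qc m A k w"
    unfolding Qc_def by (rule nn_integral_cmult[OF Qc_meas[OF assms]])
  finally show ?thesis .
qed

lemma Qc_one:
  fixes A w :: "real \<Rightarrow> ennreal" and k :: "real \<Rightarrow> real \<Rightarrow> ennreal"
  assumes [measurable]: "A \<in> borel_measurable borel" "w \<in> borel_measurable borel"
  shows "Qc 1 A k w = (\<integral>\<^sup>+y. A y * w y \<partial>lborel)"
proof -
  have "Qc 1 A k w = (\<integral>\<^sup>+v. A (v 1) * w (v 1) \<partial>PiM {1::nat} (\<lambda>_. lborel))"
    unfolding Qc_def by simp
  also have "\<dots> = (\<integral>\<^sup>+y. A y * w y \<partial>lborel)"
    by (rule PS.product_nn_integral_singleton[of "\<lambda>y. A y * w y"]) simp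
  finally show ?thesis .
qed

lemma Qc_growth:
  fixes A w :: "real \<Rightarrow> ennreal" and k :: "real \<Rightarrow> real \<Rightarrow> ennreal" and m :: nat
  assumes [measurable]: "A \<in> borel_measurable borel" "w \<in> borel_measurable borel" "case_prod k \<in> borel_measurable borel"
  and T: "\<And>x. Tc A k w x \<ge> c * w x"
  and m1: "m \<ge> 1"
  shows "Qc m A k w \<ge> c ^ (m - 1) * Qc 1 A k w"
  using m1
proof (induction m rule: nat_induct_at_least)
  case base
  then show ?case by simp
next
  case (Suc m)
  have "c ^ (Suc m - 1) * Qc 1 A k w = c * (c ^ (m-1) * Qc 1 A k w)"
    using Suc(1) by (cases m) (auto simp: mult_ac)
  also have "\<dots> \<le> c * Qc m A k w"
    by (rule mult_left_mono[OF Suc(2)]) simp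
  also have "\<dots> = Qc m A k (\<lambda>x. c * w x)"
    by (rule Qc_cmult[symmetric, OF assms(1-3) Suc(1)])
  also have "\<dots> \<le> Qc m A k (Tc A k w)"
    by (rule Qc_mono) (rule T)
  also have "\<dots> = Qc (Suc m) A k w"
    by (rule Qc_Suc[symmetric, OF assms(1-3) Suc(1)])
  finally show ?case .
qed

definition fr :: "real \<Rightarrow> real \<Rightarrow> real \<Rightarrow> real" where
  "fr x y r = 1 / (r powr (1/2) * (x + y + 3 * r / 4) powr (3/2))"

lemma key: fixes S Q a :: real assumes "S>0" "Q>0" "a > 0" "Q*Q = a + 3*(S*S)/4"
 shows "(2*(inverse S/2)*(a*Q) - 2*S*(a*(inverse Q/2*(3/4))))/(a*Q)^2 = 1/(S*((a+3*(S*S)/4)*Q))"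
proof -
  have e: "a + 3*(S*S)/4 = Q*Q" using assms by simp
  have "(2*(inverse S/2)*(a*Q) - 2*S*(a*(inverse Q/2*(3/4)))) = a*(Q*Q - 3*(S*S)/4)/(S*Q)"
    using assms(1-3) by (simp add: field_simps)
  also have "\<dots> = a*a/(S*Q)" using e by simp
  finally have n: "(2*(inverse S/2)*(a*Q) - 2*S*(a*(inverse Q/2*(3/4)))) = a*a/(S*Q)" .
  show ?thesis unfolding n e using assms by (simp add: field_simps power2_eq_square)
qed
lemma p32: "(x::real) > 0 \<Longrightarrow> x powr (3/2) = x * sqrt x"
proof -
  assume "x > 0"
  have "x powr (3/2) = x powr (1 + 1/2)" by simp
  also have "\<dots> = x powr 1 * x powr (1/2)" by (simp only: powr_add)
  finally show ?thesis using \<open>x>0\<close> by (simp add: powr_half_sqrt)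
qed
lemma fr_eq: "r > 0 \<Longrightarrow> x + y > 0 \<Longrightarrow> fr x y r = 1 / (sqrt r * ((x+y+3*r/4) * sqrt (x+y+3*r/4)))"
  unfolding fr_def by (simp add: powr_half_sqrt p32)

lemma r_integral:
  assumes a: "x + y > 0"
  shows "(\<integral>\<^sup>+r. ennreal (fr x y r) * indicator {(x+y)/10000..64*(x+y)} r \<partial>lborel) \<ge> ennreal ((793/350) / (x+y))"
proof -
  define a where "a = x + y"
  have a0: "a > 0" using a a_def by simp
  define F where "F r = 2 * sqrt r / (a * sqrt (a + 3*r/4))" for r
  have D: "(F has_real_derivative fr x y r) (at r)" if r: "r > 0" for r
  proof -
    have q: "a + 3*r/4 > 0" using a0 r by simp
    have "(F has_real_derivative
      ((2 * (inverse (sqrt r) / 2)) * (a * sqrt (a + 3*r/4)) - 2 * sqrt r * (a * (inverse (sqrt (a + 3*r/4)) / 2 * (3/4)))) / (a * sqrt (a + 3*r/4))^2) (at r)"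
      unfolding F_def using r q a0
      by (auto intro!: derivative_eq_intros simp: power2_eq_square)
    moreover have "((2 * (inverse (sqrt r) / 2)) * (a * sqrt (a + 3*r/4)) - 2 * sqrt r * (a * (inverse (sqrt (a + 3*r/4)) / 2 * (3/4)))) / (a * sqrt (a + 3*r/4))^2
       = fr x y r"
    proof -
      have Q: "sqrt (a + 3*r/4) * sqrt (a + 3*r/4) = a + 3*(sqrt r * sqrt r)/4" using q r by simp
      have "fr x y r = 1 / (sqrt r * ((a + 3*(sqrt r * sqrt r)/4) * sqrt (a + 3*r/4)))"
        unfolding fr_eq[OF r a] a_def using r by simp
      then show ?thesis using key[OF _ _ a0 Q] r q by simp
    qed
    ultimately show ?thesis by simp
  qed
  have lo: "a/10000 \<le> 64*a" using a0 by simp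
  have HI: "(fr x y has_integral (F (64*a) - F (a/10000))) {a/10000..64*a}"
  proof (rule fundamental_theorem_of_calculus[OF lo])
    fix r assume "r \<in> {a/10000..64*a}"
    then have "r > 0" using a0 by auto
    then show "(F has_vector_derivative fr x y r) (at r within {a/10000..64*a})"
      using D has_real_derivative_iff_has_vector_derivative has_vector_derivative_at_within by blast
  qed
  have I: "(\<integral>\<^sup>+r. ennreal (fr x y r) * indicator {a/10000..64*a} r \<partial>lborel) = ennreal (F (64*a) - F (a/10000))"
    by (rule nn_integral_has_integral_lebesgue'[OF _ HI]) (use a0 in \<open>auto simp: fr_eq a_def\<close>)
  have F1: "F (64*a) = 16 / (7*a)"
  proof -
    have "sqrt (64*a) = 8 * sqrt a" by (simp add: real_sqrt_mult)
    moreover have "sqrt (a + 3*(64*a)/4) = 7 * sqrt a"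
    proof -
      have "sqrt 49 = (7::real)" by (rule real_sqrt_unique) simp_all
      moreover have "a + 3*(64*a)/4 = 49 * a" by simp
      ultimately show ?thesis by (simp add: real_sqrt_mult)
    qed
    ultimately show ?thesis unfolding F_def using a0 by (simp add: field_simps)
  qed
  have F2: "F (a/10000) \<le> 1 / (50*a)"
  proof -
    have "sqrt (a/10000) = sqrt a / 100" by (simp add: real_sqrt_divide)
    moreover have "sqrt a \<le> sqrt (a + 3*(a/10000)/4)" using a0 by simp
    moreover have "sqrt a > 0" using a0 by simp
    ultimately show ?thesis unfolding F_def using a0
      by (simp add: field_simps)
  qed
  have "(793/350) / a \<le> F (64*a) - F (a/10000)"
    using F1 F2 a0 by (simp add: field_simps)
  then show ?thesis using I unfolding a_def by (simp add: ennreal_leI)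
qed

definition av :: "nat \<Rightarrow> real" where "av n = (if n < 9 then [6,11,17,25,37,51,67,84,100] ! n / 100 else 0)"

lemma numeric:
  assumes "p < 9"
  shows "317/100 * av p \<le> 793/350 * (\<Sum>n<9. av n * 2^p / (2*(2^n+2^p)))"
proof -
  have s: "(\<Sum>n<9. av n * 2^p / (2*(2^n+2^p))) = (\<Sum>n\<in>{0,1,2,3,4,5,6,7,8}. av n * 2^p / (2*(2^n+2^p)))"
    by (rule sum.cong) auto
  have "p \<in> {0,1,2,3,4,5,6,7,8}" using assms by auto
  then show ?thesis unfolding s by (auto simp: av_def)
qed
definition cell :: "real \<Rightarrow> nat \<Rightarrow> real set" where
  "cell e n = {e/2^(Suc n) ..< e/2^n}"

definition psi :: "real \<Rightarrow> real \<Rightarrow> ennreal" where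
  "psi e y = (\<Sum>n<9. ennreal (av n) * indicator (cell e n) y)"

definition Aind :: "real \<Rightarrow> real \<Rightarrow> ennreal" where
  "Aind e y = indicator {0<..<e} y"

definition kk :: "real \<Rightarrow> real \<Rightarrow> ennreal" where
  "kk x y = ennreal ((793/350) / (x + y))"

lemma div_pow_mono: "(e::real) \<ge> 0 \<Longrightarrow> m \<le> n \<Longrightarrow> e / 2^n \<le> e / 2^m"
  by (intro divide_left_mono power_increasing) auto

lemma cell_disj: "e > 0 \<Longrightarrow> x \<in> cell e p \<Longrightarrow> x \<in> cell e n \<Longrightarrow> n = p"
proof (rule ccontr)
  assume e: "e > 0" and xp: "x \<in> cell e p" and xn: "x \<in> cell e n" and ne: "n \<noteq> p"
  show False
  proof (cases "n < p")
    case True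
    then have "e/2^p \<le> e/2^(Suc n)" using e by (intro div_pow_mono) auto
    then show False using xp xn unfolding cell_def by auto
  next
    case False
    then have "p < n" using ne by auto
    then have "e/2^n \<le> e/2^(Suc p)" using e by (intro div_pow_mono) auto
    then show False using xp xn unfolding cell_def by auto
  qed
qed

lemma av_nonneg: "av n \<ge> 0"
proof (cases "n < 9")
  case True
  then have "n \<in> {0,1,2,3,4,5,6,7,8}" by auto
  then show ?thesis by (auto simp: av_def)
next
  case False
  then show ?thesis by (simp add: av_def)
qed


lemma psi_meas: "psi e \<in> borel_measurable borel"
  unfolding psi_def cell_def by measurable

lemma Aind_meas: "Aind e \<in> borel_measurable borel"
  unfolding Aind_def by measurable

lemma kk_meas: "case_prod kk \<in> borel_measurable borel"
proof -
  have "(\<lambda>z::real\<times>real. ennreal ((793/350) / (fst z + snd z))) \<in> borel_measurable (borel \<Otimes>\<^sub>M borel)"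
    by measurable
  then show ?thesis unfolding kk_def borel_prod by (simp add: case_prod_beta')
qed


lemma psi_at: assumes e: "e > 0" and x: "x \<in> cell e p" and p: "p < 9"
  shows "psi e x = ennreal (av p)"
proof -
  have "psi e x = (\<Sum>n<9. if n = p then ennreal (av p) else 0)"
    unfolding psi_def
  proof (rule sum.cong[OF refl])
    fix n :: nat assume "n \<in> {..<9}"
    show "ennreal (av n) * indicator (cell e n) x = (if n = p then ennreal (av p) else 0)"
    proof (cases "n = p")
      case True
      then show ?thesis using x by simp
    next
      case False
      then have "x \<notin> cell e n" using cell_disj[OF e x] by blast
      then show ?thesis using False by simp
    qed
  qed
  also have "\<dots> = ennreal (av p)" using p by simp
  finally show ?thesis .
qed

lemma psi_out: assumes "\<And>n. n < 9 \<Longrightarrow> x \<notin> cell e n"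
  shows "psi e x = 0"
  unfolding psi_def using assms by (intro sum.neutral) simp


lemma cell_integral:
  assumes e: "e > 0" and x: "x > 0" "x < e/2^p"
  shows "(\<integral>\<^sup>+y. Aind e y * kk x y * indicator (cell e n) y \<partial>lborel)
     \<ge> ennreal ((793/350) * (2^p / (2*(2^n+2^p))))"
proof -
  have lo: "e/2^(Suc n) \<le> e/2^n" using e by (intro div_pow_mono) auto
  have en: "e / 2^n \<le> e" using div_pow_mono[of e 0 n] e by simp
  have "(\<integral>\<^sup>+y. ennreal ((793/350) / (e/2^p + e/2^n)) * indicator (cell e n) y \<partial>lborel)
      \<le> (\<integral>\<^sup>+y. Aind e y * kk x y * indicator (cell e n) y \<partial>lborel)"
  proof (rule nn_integral_mono)
    fix y
    show "ennreal ((793/350) / (e/2^p + e/2^n)) * indicator (cell e n) y \<le> Aind e y * kk x y * indicator (cell e n) y"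
    proof (cases "y \<in> cell e n")
      case True
      then have y: "e/2^(Suc n) \<le> y" "y < e/2^n" unfolding cell_def by auto
      have y0: "y > 0" using y(1) e by (smt (verit) divide_pos_pos zero_less_power)
      have "Aind e y = 1" using y0 y(2) en unfolding Aind_def by auto
      moreover have "(793/350) / (e/2^p + e/2^n) \<le> (793/350) / (x + y)"
        using y0 x y by (intro divide_left_mono) auto
      ultimately show ?thesis using True unfolding kk_def by (auto intro!: ennreal_leI)
    qed simp
  qed
  moreover have "(\<integral>\<^sup>+y. ennreal ((793/350) / (e/2^p + e/2^n)) * indicator (cell e n) y \<partial>lborel)
     = ennreal ((793/350) / (e/2^p + e/2^n)) * ennreal (e/2^n - e/2^(Suc n))"
    using lo unfolding cell_def by (simp add: nn_integral_cmult_indicator)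
  moreover have "ennreal ((793/350) / (e/2^p + e/2^n)) * ennreal (e/2^n - e/2^(Suc n))
     = ennreal ((793/350) * (2^p / (2*(2^n+2^p))))"
  proof -
    have "(793/350) / (e/2^p + e/2^n) * (e/2^n - e/2^(Suc n)) = (793/350) * (2^p / (2*(2^n+2^p)))"
    proof -
      have h: "e * (2 ^ p * 793) / (e * (2 ^ n * 700) + e * (2 ^ p * 700)) = (2::real) ^ p * 793 / (2 ^ n * 700 + 2 ^ p * 700)"
      proof -
        have "e * (2 ^ n * 700) + e * (2 ^ p * 700) = e * ((2::real) ^ n * 700 + 2 ^ p * 700)"
          by (simp add: algebra_simps)
        then show ?thesis using e by simp
      qed
      show ?thesis using e by (simp add: field_simps h)
    qed
    then show ?thesis using e by (simp add: ennreal_mult[symmetric])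
  qed
  ultimately show ?thesis by simp
qed

lemma kk1_meas: "kk x \<in> borel_measurable borel"
  unfolding kk_def by measurable

lemma T_ineq: assumes e: "e > 0"
  shows "Tc (Aind e) kk (psi e) x \<ge> ennreal (317/100) * psi e x"
proof (cases "\<exists>p<9. x \<in> cell e p")
  case False
  then have "psi e x = 0" by (intro psi_out) auto
  then show ?thesis by simp
next
  case True
  then obtain p where p: "p < 9" "x \<in> cell e p" by auto
  have x0: "x > 0" using p(2) e unfolding cell_def
    by (smt (verit) atLeastLessThan_iff divide_pos_pos zero_less_power)
  have x1: "x < e/2^p" using p(2) unfolding cell_def by auto
  have [measurable]: "Aind e \<in> borel_measurable borel" "kk x \<in> borel_measurable borel"
    by (rule Aind_meas, rule kk1_meas)
  have "Tc (Aind e) kk (psi e) x = (\<integral>\<^sup>+y. (\<Sum>n<9. ennreal (av n) * (Aind e y * kk x y * indicator (cell e n) y)) \<partial>lborel)"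
    unfolding Tc_def psi_def by (rule nn_integral_cong) (simp only: sum_distrib_left ac_simps)
  also have "\<dots> = (\<Sum>n<9. (\<integral>\<^sup>+y. ennreal (av n) * (Aind e y * kk x y * indicator (cell e n) y) \<partial>lborel))"
    by (rule nn_integral_sum) (auto simp: cell_def)
  also have "\<dots> = (\<Sum>n<9. ennreal (av n) * (\<integral>\<^sup>+y. Aind e y * kk x y * indicator (cell e n) y \<partial>lborel))"
    by (intro sum.cong refl nn_integral_cmult) (auto simp: cell_def)
  also have "\<dots> \<ge> (\<Sum>n<9. ennreal (av n) * ennreal ((793/350) * (2^p / (2*(2^n+2^p)))))"
    by (intro sum_mono mult_left_mono cell_integral[OF e x0 x1]) auto
  finally have T1: "Tc (Aind e) kk (psi e) x \<ge> (\<Sum>n<9. ennreal (av n) * ennreal ((793/350) * (2^p / (2*(2^n+2^p)))))" .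
  have "(\<Sum>n<9. ennreal (av n) * ennreal ((793/350) * (2^p / (2*(2^n+2^p)))))
      = ennreal (\<Sum>n<9. av n * ((793/350) * (2^p / (2*(2^n+2^p)))))"
    by (subst ennreal_mult[symmetric]) (auto simp: av_nonneg intro!: sum_ennreal)
  also have "(\<Sum>n<9. av n * ((793/350) * (2^p / (2*(2^n+2^p))))) = 793/350 * (\<Sum>n<9. av n * 2^p / (2*(2^n+2^p)))"
    by (simp add: sum_distrib_left mult_ac)
  finally have T2: "(\<Sum>n<9. ennreal (av n) * ennreal ((793/350) * (2^p / (2*(2^n+2^p))))) = ennreal (793/350 * (\<Sum>n<9. av n * 2^p / (2*(2^n+2^p))))" .
  have "ennreal (317/100) * psi e x = ennreal (317/100 * av p)"
    using psi_at[OF e p(2) p(1)] av_nonneg[of p] by (simp add: ennreal_mult[symmetric])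
  also have "\<dots> \<le> ennreal (793/350 * (\<Sum>n<9. av n * 2^p / (2*(2^n+2^p))))"
    by (rule ennreal_leI) (rule numeric[OF p(1)])
  finally show ?thesis using T1 T2 by simp
qed

definition phi :: "real \<Rightarrow> real \<Rightarrow> real \<Rightarrow> ennreal" where
 "phi x y r = ennreal (fr x y r) * indicator {(x+y)/10000..64*(x+y)} r"

lemma phi_if: "phi x y r = ennreal (if (x+y)/10000 \<le> r \<and> r \<le> 64*(x+y) then fr x y r else 0)"
  unfolding phi_def by (auto simp: indicator_def)

lemma G_meas:
  fixes e :: real and m :: nat
  shows "(\<lambda>z. (\<Prod>j\<in>{1..m}. Aind e (fst z j)) * (\<Prod>j\<in>{2..m}. phi (fst z (j-1)) (fst z j) (snd z j)))
     \<in> borel_measurable (PiM {1..m} (\<lambda>_. lborel :: real measure) \<Otimes>\<^sub>M PiM {2..m} (\<lambda>_. lborel :: real measure))"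
proof -
  have [measurable]: "(\<lambda>z. phi (fst z (j-1)) (fst z j) (snd z j)) \<in> borel_measurable (PiM {1..m} (\<lambda>_. lborel :: real measure) \<Otimes>\<^sub>M PiM {2..m} (\<lambda>_. lborel :: real measure))"
    if "j \<in> {2..m}" for j :: nat
  proof -
    have [measurable]: "j - 1 \<in> {1..m}" "j \<in> {1..m}" "j \<in> {2..m}" using that by auto
    show ?thesis unfolding phi_if fr_def by measurable
  qed
  show ?thesis unfolding Aind_def by measurable
qed

lemma fr_nonneg: "fr x y r \<ge> 0"
  unfolding fr_def by simp

lemma pointwise:
  fixes v r :: "nat \<Rightarrow> real" and m :: nat
  assumes e: "e > 0" and t: "129 * real m * e \<le> t" and m2: "m \<ge> 2"
  shows "(\<Prod>j\<in>{1..m}. Aind e (v j)) * (\<Prod>j\<in>{2..m}. phi (v (j-1)) (v j) (r j))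
     \<le> indicator (int_region m t) (v,r) * ennreal (integrand m v r)"
proof (cases "(\<forall>j\<in>{1..m}. 0 < v j \<and> v j < e) \<and> (\<forall>j\<in>{2..m}. (v(j-1)+v j)/10000 \<le> r j \<and> r j \<le> 64*(v(j-1)+v j))")
  case True
  then have vA: "\<And>j. j \<in> {1..m} \<Longrightarrow> 0 < v j \<and> v j < e"
    and rA: "\<And>j. j \<in> {2..m} \<Longrightarrow> (v(j-1)+v j)/10000 \<le> r j \<and> r j \<le> 64*(v(j-1)+v j)" by auto
  have vpos: "v (j-1) + v j > 0" "v (j-1) + v j < 2*e" if "j \<in> {2..m}" for j
  proof -
    have a: "j-1 \<in> {1..m}" "j \<in> {1..m}" using that by auto
    show "v (j-1) + v j > 0" "v (j-1) + v j < 2*e" using vA[OF a(1)] vA[OF a(2)] by auto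
  qed
  have p1: "(\<Prod>j\<in>{1..m}. Aind e (v j)) = 1"
    by (rule prod.neutral) (use vA in \<open>auto simp: Aind_def\<close>)
  have "(\<Prod>j\<in>{2..m}. phi (v (j-1)) (v j) (r j)) = (\<Prod>j\<in>{2..m}. ennreal (fr (v (j-1)) (v j) (r j)))"
    by (rule prod.cong[OF refl]) (use rA in \<open>auto simp: phi_def\<close>)
  also have "\<dots> = ennreal (\<Prod>j\<in>{2..m}. fr (v (j-1)) (v j) (r j))"
    by (rule prod_ennreal) (rule fr_nonneg)
  also have "(\<Prod>j\<in>{2..m}. fr (v (j-1)) (v j) (r j)) = integrand m v r"
    unfolding integrand_def fr_def by simp
  finally have p2: "(\<Prod>j\<in>{2..m}. phi (v (j-1)) (v j) (r j)) = ennreal (integrand m v r)" .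
  have rpos: "r j > 0" if "j \<in> {2..m}" for j
    using rA[OF that] vpos[OF that] by (smt (verit) divide_pos_pos)
  have s1: "(\<Sum>j=1..m. v j) \<le> (\<Sum>j=1..m. e)"
    by (rule sum_mono) (use vA in \<open>auto intro: less_imp_le\<close>)
  have s2: "(\<Sum>j=2..m. r j) \<le> (\<Sum>j=2..m. 128 * e)"
    by (rule sum_mono) (use rA vpos in \<open>fastforce\<close>)
  have s1': "(\<Sum>j=1..m. v j) < real m * e"
  proof -
    have "(\<Sum>j=1..m. v j) < (\<Sum>j=1..m. e)"
      by (rule sum_strict_mono) (use m2 vA in auto)
    then show ?thesis by simp
  qed
  have "(\<Sum>j=2..m. r j) \<le> 128 * e * real m"
  proof -
    have "real (card {2..m}) \<le> real m" by simp
    then have "(\<Sum>j=2..m. 128 * e) \<le> 128 * e * real m"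
      using e by (simp add: mult_left_mono mult.commute)
    then show ?thesis using s2 by (simp add: mult_ac)
  qed
  then have "(\<Sum>j=1..m. v j) + (\<Sum>j=2..m. r j) < t"
  proof -
    have "real m * e + 128 * e * real m = 129 * real m * e" by (simp add: algebra_simps)
    then show ?thesis using s1' t \<open>(\<Sum>j=2..m. r j) \<le> 128 * e * real m\<close> by linarith
  qed
  then have "(v, r) \<in> int_region m t"
    unfolding int_region_def using vA rpos by auto
  then show ?thesis using p1 p2 by simp
next
  case False
  then consider (a) j where "j \<in> {1..m}" "\<not> (0 < v j \<and> v j < e)"
    | (b) j where "j \<in> {2..m}" "\<not> ((v(j-1)+v j)/10000 \<le> r j \<and> r j \<le> 64*(v(j-1)+v j))"
    by blast
  then have "(\<Prod>j\<in>{1..m}. Aind e (v j)) * (\<Prod>j\<in>{2..m}. phi (v (j-1)) (v j) (r j)) = 0"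
  proof cases
    case a
    then have "(\<Prod>j\<in>{1..m}. Aind e (v j)) = 0"
      by (intro prod_zero) (auto simp: Aind_def intro!: bexI[of _ j])
    then show ?thesis by simp
  next
    case b
    then have "(\<Prod>j\<in>{2..m}. phi (v (j-1)) (v j) (r j)) = 0"
      by (intro prod_zero) (auto simp: phi_def intro!: bexI[of _ j])
    then show ?thesis by simp
  qed
  then show ?thesis by (metis zero_le)
qed

lemma av_le1: "av n \<le> 1"
proof (cases "n < 9")
  case True
  then have "n \<in> {0,1,2,3,4,5,6,7,8}" by auto
  then show ?thesis by (auto simp: av_def)
next
  case False
  then show ?thesis by (simp add: av_def)
qed

lemma psi_le1: assumes e: "e > 0" shows "psi e x \<le> 1"
proof (cases "\<exists>p<9. x \<in> cell e p")
  case True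
  then obtain p where "p < 9" "x \<in> cell e p" by auto
  then show ?thesis using psi_at[OF e] av_le1[of p] by simp
next
  case False
  then show ?thesis using psi_out[of x e] by auto
qed

lemma Q1_lower: assumes e: "e > 0"
  shows "Qc 1 (Aind e) kk (psi e) \<ge> ennreal (3/100 * e)"
proof -
  have "Qc 1 (Aind e) kk (psi e) = (\<integral>\<^sup>+y. Aind e y * psi e y \<partial>lborel)"
    by (rule Qc_one) (rule Aind_meas, rule psi_meas)
  also have "\<dots> \<ge> (\<integral>\<^sup>+y. ennreal (6/100) * indicator (cell e 0) y \<partial>lborel)"
  proof (rule nn_integral_mono)
    fix y
    show "ennreal (6/100) * indicator (cell e 0) y \<le> Aind e y * psi e y"
    proof (cases "y \<in> cell e 0")
      case True
      then have "Aind e y = 1" using e unfolding cell_def Aind_def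
        by (auto simp: indicator_def)
      moreover have "psi e y = ennreal (av 0)" by (rule psi_at[OF e True]) simp
      ultimately show ?thesis using True by (simp add: av_def)
    qed simp
  qed
  also have "(\<integral>\<^sup>+y. ennreal (6/100) * indicator (cell e 0) y \<partial>lborel) = ennreal (6/100) * ennreal (e - e/2)"
    using e unfolding cell_def by (simp add: nn_integral_cmult_indicator)
  also have "\<dots> = ennreal (3/100 * e)"
    using e by (simp add: ennreal_mult[symmetric])
  finally show ?thesis .
qed

lemma main_lower:
  fixes m :: nat and e t :: real
  assumes e: "e > 0" and t: "129 * real m * e \<le> t" and m2: "m \<ge> 2"
  shows "(\<integral>\<^sup>+ x. indicator (int_region m t) x * ennreal (integrand m (fst x) (snd x)) \<partial>int_space m)
     \<ge> ennreal ((317/100)^(m-1) * (3/100 * e))"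
proof -
  let ?G = "\<lambda>z. (\<Prod>j\<in>{1..m}. Aind e (fst z j)) * (\<Prod>j\<in>{2..m}. phi (fst z (j-1)) (fst z j) (snd z j))"
  interpret S2: sigma_finite_measure "PiM {2..m} (\<lambda>_. lborel::real measure)"
    by (rule PS.sigma_finite) simp
  have phim: "(\<lambda>r. phi a b r) \<in> borel_measurable lborel" for a b
    unfolding phi_if fr_def by measurable
  have step1: "(\<integral>\<^sup>+ x. ?G x \<partial>int_space m) \<le> (\<integral>\<^sup>+ x. indicator (int_region m t) x * ennreal (integrand m (fst x) (snd x)) \<partial>int_space m)"
  proof (rule nn_integral_mono)
    fix x :: "(nat \<Rightarrow> real) \<times> (nat \<Rightarrow> real)"
    show "?G x \<le> indicator (int_region m t) x * ennreal (integrand m (fst x) (snd x))"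
      using pointwise[OF e t m2, of "fst x" "snd x"] by simp
  qed
  have step2: "(\<integral>\<^sup>+ x. ?G x \<partial>int_space m) = (\<integral>\<^sup>+ v. \<integral>\<^sup>+ r. ?G (v, r) \<partial>PiM {2..m} (\<lambda>_. lborel) \<partial>PiM {1..m} (\<lambda>_. lborel))"
    unfolding int_space_def by (rule S2.nn_integral_fst[OF G_meas, symmetric])
  have step3: "(\<integral>\<^sup>+ r. ?G (v, r) \<partial>PiM {2..m} (\<lambda>_. lborel)) \<ge> (\<Prod>j\<in>{1..m}. Aind e (v j)) * (\<Prod>j\<in>{2..m}. kk (v (j-1)) (v j)) * 1"
    for v :: "nat \<Rightarrow> real"
  proof -
    have "(\<integral>\<^sup>+ r. ?G (v, r) \<partial>PiM {2..m} (\<lambda>_. lborel)) = (\<Prod>j\<in>{1..m}. Aind e (v j)) * (\<integral>\<^sup>+ r. (\<Prod>j\<in>{2..m}. phi (v (j-1)) (v j) (r j)) \<partial>PiM {2..m} (\<lambda>_. lborel))"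
    proof -
      have "(\<lambda>r. \<Prod>j\<in>{2..m}. phi (v (j-1)) (v j) (r j)) \<in> borel_measurable (PiM {2..m} (\<lambda>_. lborel::real measure))"
        using phim by measurable
      then show ?thesis by (simp add: nn_integral_cmult)
    qed
    also have "(\<integral>\<^sup>+ r. (\<Prod>j\<in>{2..m}. phi (v (j-1)) (v j) (r j)) \<partial>PiM {2..m} (\<lambda>_. lborel))
       = (\<Prod>j\<in>{2..m}. \<integral>\<^sup>+ r. phi (v (j-1)) (v j) r \<partial>lborel)"
      by (rule PS.product_nn_integral_prod[of "{2..m}" "\<lambda>j r. phi (v (j-1)) (v j) r"]) (use phim in auto)
    finally have eq: "(\<integral>\<^sup>+ r. ?G (v, r) \<partial>PiM {2..m} (\<lambda>_. lborel)) = (\<Prod>j\<in>{1..m}. Aind e (v j)) * (\<Prod>j\<in>{2..m}. \<integral>\<^sup>+ r. phi (v (j-1)) (v j) r \<partial>lborel)" .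
    show ?thesis
    proof (cases "\<forall>j\<in>{1..m}. 0 < v j")
      case True
      have "(\<Prod>j\<in>{2..m}. kk (v (j-1)) (v j)) \<le> (\<Prod>j\<in>{2..m}. \<integral>\<^sup>+ r. phi (v (j-1)) (v j) r \<partial>lborel)"
      proof (rule prod_mono_ennreal)
        fix j assume j: "j \<in> {2..m}"
        then have j1: "j - 1 \<in> {1..m}" and j2: "j \<in> {1..m}" by auto
        have "v (j-1) > 0" using True j1 by blast
        moreover have "v j > 0" using True j2 by blast
        ultimately have "v (j-1) + v j > 0" by simp
        from r_integral[OF this] show "kk (v (j-1)) (v j) \<le> (\<integral>\<^sup>+ r. phi (v (j-1)) (v j) r \<partial>lborel)"
          unfolding kk_def phi_def by simp
      qed
      then show ?thesis unfolding eq by (simp add: mult_left_mono)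
    next
      case False
      then obtain j where "j \<in> {1..m}" "\<not> 0 < v j" by auto
      then have z: "(\<Prod>j\<in>{1..m}. Aind e (v j)) = 0"
        by (intro prod_zero) (auto simp: Aind_def intro!: bexI[of _ j])
      show ?thesis unfolding eq by (simp only: z mult_zero_left order_refl)
    qed
  qed
  have step4: "Qc m (Aind e) kk (\<lambda>_. 1) \<le> (\<integral>\<^sup>+ x. ?G x \<partial>int_space m)"
    unfolding step2 Qc_def by (rule nn_integral_mono) (use step3 in simp)
  have step5: "Qc m (Aind e) kk (psi e) \<le> Qc m (Aind e) kk (\<lambda>_. 1)"
    by (rule Qc_mono) (rule psi_le1[OF e])
  have step6: "Qc m (Aind e) kk (psi e) \<ge> ennreal (317/100) ^ (m-1) * Qc 1 (Aind e) kk (psi e)"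
    by (rule Qc_growth[OF Aind_meas psi_meas kk_meas T_ineq[OF e]]) (use m2 in simp)
  have eA: "ennreal ((317/100)^(m-1) * (3/100 * e)) = ennreal ((317/100)^(m-1)) * ennreal (3/100 * e)"
    by (rule ennreal_mult) (use e in auto)
  have eB: "ennreal ((317/100)^(m-1)) = ennreal (317/100) ^ (m-1)"
    by (rule ennreal_power[symmetric]) simp
  have "ennreal ((317/100)^(m-1) * (3/100 * e)) = ennreal (317/100) ^ (m-1) * ennreal (3/100 * e)"
    using eA eB by simp
  also have "\<dots> \<le> ennreal (317/100) ^ (m-1) * Qc 1 (Aind e) kk (psi e)"
    by (rule mult_left_mono[OF Q1_lower[OF e]]) simp
  finally show ?thesis using step1 step4 step5 step6 by (meson order_trans)
qed

lemma final_real: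
  fixes m :: nat and t :: real
  assumes m3: "m \<ge> 3" and t: "t > 0"
  shows "(3*t/(129*317)) * 1.008 ^ m / (real m * (real m - 1))
      \<le> (1/pi)^m * ((317/100)^(m-1) * (3/100 * (t / (129 * real m))))"
proof -
  define C where "C = 3*t/(129*317)"
  have C0: "C > 0" using t unfolding C_def by simp
  obtain k where k: "m = Suc k" using m3 by (cases m) auto
  have pb: "1.008 \<le> 317/(100*pi)"
    using pi_approx(2) pi_gt3 by (simp add: field_simps)
  have pw: "1.008 ^ m \<le> (317/(100*pi)) ^ m"
    by (rule power_mono[OF pb]) simp
  have eq: "(1/pi)^m * ((317/100)^(m-1) * (3/100 * (t / (129 * real m)))) = (317/(100*pi))^m * (C / real m)"
  proof -
    have p0: "pi ^ k > 0" "(100::real)^k > 0" "pi > 0" "real m > 0" using pi_gt_zero m3 by auto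
    have km: "m - 1 = k" using k by simp
    have pm: "\<And>x::real. x ^ m = x * x ^ k" using k by simp
    show ?thesis
      unfolding C_def km pm using p0 by (simp add: power_divide field_simps)
  qed
  have m1: "real m * (real m - 1) \<ge> real m" using m3 by simp
  have "C * 1.008 ^ m / (real m * (real m - 1)) \<le> C * 1.008 ^ m / real m"
    using m1 m3 C0 by (intro divide_left_mono) auto
  also have "\<dots> \<le> (317/(100*pi))^m * (C / real m)"
    using pw C0 m3 by (simp add: field_simps mult_left_mono)
  finally show ?thesis unfolding eq C_def by simp
qed

theorem mainTheorem14:
  fixes t :: real
  assumes "t > 0"
  shows "\<exists>C::real. C > 0 \<and> (\<forall>m::nat. m \<ge> 3 \<longrightarrow>
    ennreal ((1/pi) ^ m) *
      (\<integral>\<^sup>+ x. indicator (int_region m t) x * ennreal (integrand m (fst x) (snd x)) \<partial>int_space m)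
    \<ge> ennreal (C * 1.008 ^ m / (real m * (real m - 1))))"
proof (intro exI[of _ "3*t/(129*317)"] conjI allI impI)
  show "3*t/(129*317) > (0::real)" using assms by simp
  fix m :: nat assume m3: "m \<ge> 3"
  define e where "e = t / (129 * real m)"
  have e: "e > 0" using assms m3 unfolding e_def by simp
  have et: "129 * real m * e \<le> t" using m3 unfolding e_def by simp
  have L: "(\<integral>\<^sup>+ x. indicator (int_region m t) x * ennreal (integrand m (fst x) (snd x)) \<partial>int_space m)
     \<ge> ennreal ((317/100)^(m-1) * (3/100 * e))"
    by (rule main_lower[OF e et]) (use m3 in simp)
  have "ennreal (3*t/(129*317) * 1.008 ^ m / (real m * (real m - 1)))
      \<le> ennreal ((1/pi)^m * ((317/100)^(m-1) * (3/100 * e)))"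
    unfolding e_def by (rule ennreal_leI) (rule final_real[OF m3 assms])
  also have "\<dots> = ennreal ((1/pi)^m) * ennreal ((317/100)^(m-1) * (3/100 * e))"
    by (rule ennreal_mult) (use e in auto)
  also have "\<dots> \<le> ennreal ((1/pi)^m) *
      (\<integral>\<^sup>+ x. indicator (int_region m t) x * ennreal (integrand m (fst x) (snd x)) \<partial>int_space m)"
    by (rule mult_left_mono[OF L]) simp
  finally show "ennreal ((1/pi) ^ m) *
      (\<integral>\<^sup>+ x. indicator (int_region m t) x * ennreal (integrand m (fst x) (snd x)) \<partial>int_space m)
    \<ge> ennreal (3*t/(129*317) * 1.008 ^ m / (real m * (real m - 1)))" .
qed

end
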